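(* Let $\mathcal{T}$ be a finite total order, $\mathcal{G}$ a finite grid poset, and $S\subseteq\mathcal{T}\times\mathcal{G}$ a spread. If $x\in\operatorname{cover}S$, then $\pi_0(x)\in\pi_0\big(\min S\cup(\max S+e_0)\big)$. In particular the aligned subgrid $\pi_0\big(\min S\cup(\max S+e_0)\big)\times\mathcal{G}$ contains $\min S$ and $\operatorname{cover}S$.
   Context: Identify $\mathcal{T}=[m_0]=\{0<\dots<m_0-1\}$ and $\mathcal{G}=[m_1]\times\cdots\times[m_n]$, with product order on $\mathcal{T}\times\mathcal{G}$; $\pi_0:\mathcal{T}\times\mathcal{G}\to\mathcal{T}$ is the first projection. For $x\in\mathcal{T}\times\mathcal{G}$, $x+e_0$ is $x$ with its $0$-th coordinate replaced by $\min(m_0-1,\pi_0(x)+1)$, and $X+e_0=\{x+e_0:x\in X\}$. $\uparrow X=\{p:\exists x\in X,x\le p\}$, $\operatorname{cover}X=\min(\uparrow X\setminus X)$. A spread is a nonempty subset that is convex ($s\le p\le s'$ with $s,s'\in S$ implies $p\in S$) and connected by zigzags of comparable elements. *)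

theory Defs
  imports Main
begin

text \<open>Points of T x G = [m 0] x [m 1] x ... x [m n] are functions nat => nat,
  coordinate 0 is the T-coordinate, coordinates 1..n the grid coordinates,
  all coordinates beyond n are 0. The order is the pointwise (product) order,
  which is the built-in order on functions.\<close>

definition grid :: "nat \<Rightarrow> (nat \<Rightarrow> nat) \<Rightarrow> (nat \<Rightarrow> nat) set" where
  "grid n m = {x. \<forall>i. (i \<le> n \<longrightarrow> x i < m i) \<and> (n < i \<longrightarrow> x i = 0)}"

definition upset :: "(nat \<Rightarrow> nat) set \<Rightarrow> (nat \<Rightarrow> nat) set \<Rightarrow> (nat \<Rightarrow> nat) set" where
  "upset P X = {p \<in> P. \<exists>x\<in>X. x \<le> p}"

definition minimals :: "(nat \<Rightarrow> nat) set \<Rightarrow> (nat \<Rightarrow> nat) set" where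
  "minimals X = {x \<in> X. \<forall>y\<in>X. y \<le> x \<longrightarrow> y = x}"

definition maximals :: "(nat \<Rightarrow> nat) set \<Rightarrow> (nat \<Rightarrow> nat) set" where
  "maximals X = {x \<in> X. \<forall>y\<in>X. x \<le> y \<longrightarrow> y = x}"

definition cover :: "(nat \<Rightarrow> nat) set \<Rightarrow> (nat \<Rightarrow> nat) set \<Rightarrow> (nat \<Rightarrow> nat) set" where
  "cover P X = minimals (upset P X - X)"

definition convex_in :: "(nat \<Rightarrow> nat) set \<Rightarrow> (nat \<Rightarrow> nat) set \<Rightarrow> bool" where
  "convex_in P S \<longleftrightarrow> (\<forall>s\<in>S. \<forall>s'\<in>S. \<forall>p\<in>P. s \<le> p \<and> p \<le> s' \<longrightarrow> p \<in> S)"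

definition comparable_in :: "(nat \<Rightarrow> nat) set \<Rightarrow> (nat \<Rightarrow> nat) \<Rightarrow> (nat \<Rightarrow> nat) \<Rightarrow> bool" where
  "comparable_in S a b \<longleftrightarrow> a \<in> S \<and> b \<in> S \<and> (a \<le> b \<or> b \<le> a)"

definition zigzag_connected :: "(nat \<Rightarrow> nat) set \<Rightarrow> bool" where
  "zigzag_connected S \<longleftrightarrow> (\<forall>a\<in>S. \<forall>b\<in>S. (comparable_in S)\<^sup>*\<^sup>* a b)"

definition spread :: "(nat \<Rightarrow> nat) set \<Rightarrow> (nat \<Rightarrow> nat) set \<Rightarrow> bool" where
  "spread P S \<longleftrightarrow> S \<noteq> {} \<and> S \<subseteq> P \<and> convex_in P S \<and> zigzag_connected S"

definition plus_e0 :: "(nat \<Rightarrow> nat) \<Rightarrow> (nat \<Rightarrow> nat) \<Rightarrow> (nat \<Rightarrow> nat)" where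
  "plus_e0 m x = x(0 := min (m 0 - 1) (x 0 + 1))"

end

theory Submission
  imports Defs "HOL-Library.FuncSet"
begin

lemma finite_grid: "finite (grid n m)"
proof -
  have "inj_on (\<lambda>f. restrict f {..n}) (grid n m)"
  proof (rule inj_onI)
    fix f g assume f: "f \<in> grid n m" and g: "g \<in> grid n m"
      and e: "restrict f {..n} = restrict g {..n}"
    show "f = g"
    proof
      fix i show "f i = g i"
      proof (cases "i \<le> n")
        case True then show ?thesis using fun_cong[OF e, of i] by simp
      next
        case False then show ?thesis using f g by (simp add: grid_def)
      qed
    qed
  qed
  moreover have "(\<lambda>f. restrict f {..n}) ` grid n m \<subseteq> PiE {..n} (\<lambda>i. {..<m i})"
    by (auto simp: grid_def PiE_def extensional_def)
  moreover have "finite (PiE {..n} (\<lambda>i. {..<m i}))" by (simp add: finite_PiE)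
  ultimately show ?thesis by (meson finite_imageD finite_subset)
qed

theorem mainTheorem15:
  fixes n :: nat and m :: "nat \<Rightarrow> nat" and S :: "(nat \<Rightarrow> nat) set"
  defines "P \<equiv> grid n m"
  defines "A \<equiv> (\<lambda>y. y 0) ` (minimals S \<union> plus_e0 m ` maximals S)"
  assumes "spread P S"
  shows "(\<forall>x\<in>cover P S. x 0 \<in> A) \<and> minimals S \<union> cover P S \<subseteq> {p \<in> P. p 0 \<in> A}"
proof -
  have SP: "S \<subseteq> P" and cv: "convex_in P S" using assms(3) by (auto simp: spread_def)
  have finS: "finite S" using SP finite_grid P_def finite_subset by blast
  have main: "x 0 \<in> A" if xc: "x \<in> cover P S" for x
  proof -
    have xP: "x \<in> P" and xnS: "x \<notin> S" and xmin: "\<And>y. y \<in> upset P S - S \<Longrightarrow> y \<le> x \<Longrightarrow> y = x"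
      using xc by (auto simp: cover_def minimals_def upset_def)
    obtain s where sS: "s \<in> S" and sx: "s \<le> x" using xc by (auto simp: cover_def minimals_def upset_def)
    have xm0: "x 0 < m 0" using xP by (simp add: P_def grid_def)
    show ?thesis
    proof (cases "\<exists>s\<in>S. s \<le> x \<and> s 0 < x 0")
      case True
      then obtain s where sS: "s \<in> S" and sx: "s \<le> x" and s0: "s 0 < x 0" by blast
      define y where "y = x(0 := x 0 - 1)"
      have sy: "s \<le> y" using sx s0 unfolding y_def le_fun_def by auto
      have yx: "y \<le> x" unfolding y_def le_fun_def by auto
      have yne: "y \<noteq> x"
      proof
        assume "y = x"
        then have "y 0 = x 0" by simp
        then show False using s0 unfolding y_def by simp
      qed
      have yP: "y \<in> P" using xP xm0 unfolding P_def grid_def y_def by auto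
      have yS: "y \<in> S"
      proof (rule ccontr)
        assume "y \<notin> S"
        then have "y \<in> upset P S - S" using yP sy sS by (auto simp: upset_def)
        then show False using xmin yx yne by blast
      qed
      obtain w where wS: "w \<in> S" and yw: "y \<le> w" and wmax: "\<forall>z\<in>S. w \<le> z \<longrightarrow> z = w"
        using finite_has_maximal2[OF finS yS] by blast
      have w0: "w 0 = x 0 - 1"
      proof (rule ccontr)
        assume "w 0 \<noteq> x 0 - 1"
        moreover have "y 0 \<le> w 0" using yw by (simp add: le_fun_def)
        ultimately have "x 0 \<le> w 0" unfolding y_def by simp
        then have "x \<le> w" using yw unfolding le_fun_def y_def
          by (metis fun_upd_other)
        then have "x \<in> S" using cv sS sx wS xP unfolding convex_in_def by blast
        then show False using xnS by simp
      qed
      have "w \<in> maximals S" using wS wmax by (auto simp: maximals_def)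
      moreover have "plus_e0 m w 0 = x 0" using w0 s0 xm0 by (simp add: plus_e0_def)
      ultimately have "plus_e0 m w \<in> minimals S \<union> plus_e0 m ` maximals S" by blast
      then show ?thesis unfolding A_def using \<open>plus_e0 m w 0 = x 0\<close> by (metis image_eqI)
    next
      case False
      obtain t where tS: "t \<in> S" and ts: "t \<le> s" and tmin: "\<forall>z\<in>S. z \<le> t \<longrightarrow> z = t"
        using finite_has_minimal2[OF finS sS] by blast
      have tx: "t \<le> x" using ts sx by simp
      then have "t 0 \<le> x 0" by (simp add: le_fun_def)
      then have "t 0 = x 0" using False tS tx by force
      moreover have "t \<in> minimals S" using tS tmin by (auto simp: minimals_def)
      ultimately show ?thesis unfolding A_def by (metis UnI1 image_eqI)
    qed
  qed
  have "minimals S \<subseteq> {p \<in> P. p 0 \<in> A}" using SP unfolding A_def minimals_def by auto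
  moreover have "cover P S \<subseteq> {p \<in> P. p 0 \<in> A}" using main by (auto simp: cover_def minimals_def upset_def)
  ultimately show ?thesis using main by blast
qed

end
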